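(* Let $(\Omega,\mathcal F,P)$ be a probability space with filtrations $\mathbb F=(\mathcal F_t)_{t\ge0}\subseteq\mathbb G=(\mathcal G_t)_{t\ge0}$ satisfying the usual conditions, and let $X$ be a positive càdlàg $(P,\mathbb G)$-local martingale. Assume there is a sequence $(\tau_n)_{n\in\mathbb N}$ of $\mathbb F$-stopping times increasing to $\infty$ such that each stopped process $X^{\tau_n}$ is a bounded $(P,\mathbb G)$-martingale. Then for every probability measure $Q\sim P$ such that $X$ is a $(Q,\mathbb G)$-local martingale, the $Q$-optional projection ${}^{o,Q}X$ of $X$ into $\mathbb F$ is a $(Q,\mathbb F)$-local martingale.
   Context: For a probability measure $Q\sim P$, the $Q$-optional projection ${}^{o,Q}X$ of $X$ into $\mathbb F$ is the unique càdlàg $\mathbb F$-optional process with $\mathbf 1_{\{\sigma<\infty\}}\,{}^{o,Q}X_\sigma=\mathbb E^Q[\mathbf 1_{\{\sigma<\infty\}}X_\sigma\mid\mathcal F_\sigma]$ a.s. for every $\mathbb F$-stopping time $\sigma$; in particular ${}^{o,Q}X_t=\mathbb E^Q[X_t\mid\mathcal F_t]$. When $Q=P$ it is written ${}^oX$. *)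

theory Defs
  imports "HOL-Probability.Probability"
begin

text \<open>Continuous time is modelled by the type real, only times t \<ge> 0 matter.
  A filtration is a family of measures (only their sigma-algebras are used)
  indexed by time; stopping times take values in [0,\<infinity>] = ennreal.\<close>

definition is_filtration :: "'a measure \<Rightarrow> (real \<Rightarrow> 'a measure) \<Rightarrow> bool" where
  "is_filtration P F \<longleftrightarrow>
     (\<forall>t\<ge>0. subalgebra P (F t)) \<and>
     (\<forall>s t. 0 \<le> s \<longrightarrow> s \<le> t \<longrightarrow> sets (F s) \<subseteq> sets (F t))"

definition usual_conditions :: "'a measure \<Rightarrow> (real \<Rightarrow> 'a measure) \<Rightarrow> bool" where
  "usual_conditions P F \<longleftrightarrow>
     is_filtration P F \<and>
     (\<forall>t\<ge>0. sets (F t) = (\<Inter>s\<in>{t<..}. sets (F s))) \<and>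
     (\<forall>A\<in>sets P. emeasure P A = 0 \<longrightarrow> (\<forall>B. B \<subseteq> A \<longrightarrow> B \<in> sets (F 0)))"

definition sub_filtration :: "(real \<Rightarrow> 'a measure) \<Rightarrow> (real \<Rightarrow> 'a measure) \<Rightarrow> bool" where
  "sub_filtration F G \<longleftrightarrow> (\<forall>t\<ge>0. sets (F t) \<subseteq> sets (G t))"

definition equiv_measure :: "'a measure \<Rightarrow> 'a measure \<Rightarrow> bool" where
  "equiv_measure Q P \<longleftrightarrow> prob_space Q \<and> space Q = space P \<and> sets Q = sets P \<and>
     (\<forall>A\<in>sets P. emeasure Q A = 0 \<longleftrightarrow> emeasure P A = 0)"

definition is_stopping_time :: "(real \<Rightarrow> 'a measure) \<Rightarrow> ('a \<Rightarrow> ennreal) \<Rightarrow> bool" where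
  "is_stopping_time F \<sigma> \<longleftrightarrow>
     (\<forall>t\<ge>0. {\<omega> \<in> space (F t). \<sigma> \<omega> \<le> ennreal t} \<in> sets (F t))"

definition stopped :: "('a \<Rightarrow> ennreal) \<Rightarrow> (real \<Rightarrow> 'a \<Rightarrow> real) \<Rightarrow> real \<Rightarrow> 'a \<Rightarrow> real" where
  "stopped \<sigma> Y t \<omega> = (if ennreal t \<le> \<sigma> \<omega> then Y t \<omega> else Y (enn2real (\<sigma> \<omega>)) \<omega>)"

definition cadlag :: "'a measure \<Rightarrow> (real \<Rightarrow> 'a \<Rightarrow> real) \<Rightarrow> bool" where
  "cadlag P Y \<longleftrightarrow> (\<forall>\<omega>\<in>space P. \<forall>t\<ge>0.
      continuous (at_right t) (\<lambda>s. Y s \<omega>) \<and>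
      (t > 0 \<longrightarrow> (\<exists>l. ((\<lambda>s. Y s \<omega>) \<longlongrightarrow> l) (at_left t))))"

definition adapted :: "(real \<Rightarrow> 'a measure) \<Rightarrow> (real \<Rightarrow> 'a \<Rightarrow> real) \<Rightarrow> bool" where
  "adapted F Y \<longleftrightarrow> (\<forall>t\<ge>0. Y t \<in> borel_measurable (F t))"

definition martingale :: "'a measure \<Rightarrow> (real \<Rightarrow> 'a measure) \<Rightarrow> (real \<Rightarrow> 'a \<Rightarrow> real) \<Rightarrow> bool" where
  "martingale Q H Y \<longleftrightarrow> adapted H Y \<and> (\<forall>t\<ge>0. integrable Q (Y t)) \<and>
     (\<forall>s t. 0 \<le> s \<longrightarrow> s \<le> t \<longrightarrow> (AE \<omega> in Q. real_cond_exp Q (H s) (Y t) \<omega> = Y s \<omega>))"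

definition localizing_seq :: "'a measure \<Rightarrow> (real \<Rightarrow> 'a measure) \<Rightarrow> (nat \<Rightarrow> 'a \<Rightarrow> ennreal) \<Rightarrow> bool" where
  "localizing_seq Q H \<tau> \<longleftrightarrow> (\<forall>n. is_stopping_time H (\<tau> n)) \<and>
     (AE \<omega> in Q. mono (\<lambda>n. \<tau> n \<omega>) \<and> (\<lambda>n. \<tau> n \<omega>) \<longlonglongrightarrow> \<infinity>)"

definition local_martingale :: "'a measure \<Rightarrow> (real \<Rightarrow> 'a measure) \<Rightarrow> (real \<Rightarrow> 'a \<Rightarrow> real) \<Rightarrow> bool" where
  "local_martingale Q H Y \<longleftrightarrow> cadlag Q Y \<and> adapted H Y \<and>
     (\<exists>\<sigma>. localizing_seq Q H \<sigma> \<and> (\<forall>n. martingale Q H (stopped (\<sigma> n) Y)))"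

definition bounded_process :: "'a measure \<Rightarrow> (real \<Rightarrow> 'a \<Rightarrow> real) \<Rightarrow> bool" where
  "bounded_process P Y \<longleftrightarrow> (\<exists>C. \<forall>t\<ge>0. \<forall>\<omega>\<in>space P. \<bar>Y t \<omega>\<bar> \<le> C)"

definition F_infty :: "'a measure \<Rightarrow> (real \<Rightarrow> 'a measure) \<Rightarrow> 'a set set" where
  "F_infty P F = sigma_sets (space P) (\<Union>t\<in>{0..}. sets (F t))"

definition F_at :: "'a measure \<Rightarrow> (real \<Rightarrow> 'a measure) \<Rightarrow> ('a \<Rightarrow> ennreal) \<Rightarrow> 'a measure" where
  "F_at P F \<sigma> = sigma (space P)
     {A \<in> F_infty P F. \<forall>t\<ge>0. {\<omega>\<in>A. \<sigma> \<omega> \<le> ennreal t} \<in> sets (F t)}"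

definition value_at :: "(real \<Rightarrow> 'a \<Rightarrow> real) \<Rightarrow> ('a \<Rightarrow> ennreal) \<Rightarrow> 'a \<Rightarrow> real" where
  "value_at Y \<sigma> \<omega> = (if \<sigma> \<omega> < \<infinity> then Y (enn2real (\<sigma> \<omega>)) \<omega> else 0)"

text \<open>Optional sigma-algebra on [0,\<infinity>) \<times> \<Omega>, generated by the stochastic
  intervals [[\<sigma>,\<infinity>[[ of F-stopping times.\<close>
definition optional_sets :: "'a measure \<Rightarrow> (real \<Rightarrow> 'a measure) \<Rightarrow> (real \<times> 'a) set set" where
  "optional_sets P F = sigma_sets ({0..} \<times> space P)
     {{(t, \<omega>). 0 \<le> t \<and> \<omega> \<in> space P \<and> \<sigma> \<omega> \<le> ennreal t} | \<sigma>. is_stopping_time F \<sigma>}"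

definition optional :: "'a measure \<Rightarrow> (real \<Rightarrow> 'a measure) \<Rightarrow> (real \<Rightarrow> 'a \<Rightarrow> real) \<Rightarrow> bool" where
  "optional P F Y \<longleftrightarrow> (\<forall>B\<in>sets borel.
     {(t, \<omega>). 0 \<le> t \<and> \<omega> \<in> space P \<and> Y t \<omega> \<in> B} \<in> optional_sets P F)"

definition optional_projection ::
  "'a measure \<Rightarrow> (real \<Rightarrow> 'a measure) \<Rightarrow> (real \<Rightarrow> 'a \<Rightarrow> real) \<Rightarrow> (real \<Rightarrow> 'a \<Rightarrow> real) \<Rightarrow> bool" where
  "optional_projection Q F X Y \<longleftrightarrow> cadlag Q Y \<and> optional Q F Y \<and>
     (\<forall>\<sigma>. is_stopping_time F \<sigma> \<longrightarrow>
        (AE \<omega> in Q. value_at Y \<sigma> \<omega> = real_cond_exp Q (F_at Q F \<sigma>) (value_at X \<sigma>) \<omega>))"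

end

theory Submission
  imports Defs
begin


lemma sfs_of_prob:
  assumes "prob_space Q" "subalgebra Q H"
  shows "sigma_finite_subalgebra Q H"
  apply (rule finite_measure_subalgebra_is_sigma_finite)
  using assms unfolding finite_measure_subalgebra_def finite_measure_subalgebra_axioms_def
  by (auto simp: prob_space_def)


lemma enn2real_le_iff':
  fixes x :: ennreal
  assumes "x < \<infinity>" "0 \<le> v"
  shows "enn2real x \<le> v \<longleftrightarrow> x \<le> ennreal v"
  using assms by (cases x rule: ennreal_cases) (auto simp: ennreal_le_iff)

lemma stopped_eq:
  assumes "0 \<le> u"
  shows "stopped \<tau> Y u \<omega> = Y (enn2real (min (\<tau> \<omega>) (ennreal u))) \<omega>"
proof (cases "ennreal u \<le> \<tau> \<omega>")
  case True
  then show ?thesis using assms by (simp add: stopped_def min_absorb2)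
next
  case False
  then show ?thesis by (simp add: stopped_def min_absorb1)
qed

lemma theta_props:
  assumes "0 \<le> u"
  shows "0 \<le> enn2real (min (\<tau> \<omega>) (ennreal u))" "enn2real (min (\<tau> \<omega>) (ennreal u)) \<le> u"
proof -
  show "0 \<le> enn2real (min (\<tau> \<omega>) (ennreal u))" by simp
  have "min (\<tau> \<omega>) (ennreal u) < \<infinity>" by (simp add: min.strict_coboundedI2)
  then show "enn2real (min (\<tau> \<omega>) (ennreal u)) \<le> u"
    using assms by (subst enn2real_le_iff') auto
qed

lemma theta_le_iff:
  assumes "0 \<le> u" "0 \<le> v"
  shows "enn2real (min (\<tau> \<omega>) (ennreal u)) \<le> v \<longleftrightarrow> (u \<le> v \<or> \<tau> \<omega> \<le> ennreal v)"
proof -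
  have "min (\<tau> \<omega>) (ennreal u) < \<infinity>" by (simp add: min.strict_coboundedI2)
  then have "enn2real (min (\<tau> \<omega>) (ennreal u)) \<le> v \<longleftrightarrow> min (\<tau> \<omega>) (ennreal u) \<le> ennreal v"
    using assms by (subst enn2real_le_iff') auto
  also have "\<dots> \<longleftrightarrow> (u \<le> v \<or> \<tau> \<omega> \<le> ennreal v)"
    using assms by (auto simp: min_le_iff_disj ennreal_le_iff)
  finally show ?thesis .
qed

definition kk :: "nat \<Rightarrow> real \<Rightarrow> nat" where "kk j x = nat \<lfloor>2^j * x\<rfloor> + 1"

lemma kk_bounds:
  assumes "0 \<le> x"
  shows "x < real (kk j x) / 2^j" "real (kk j x) / 2^j \<le> x + 1 / 2^j"
proof -
  have p: "(0::real) < 2^j" by simp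
  have f: "real (nat \<lfloor>2^j * x\<rfloor>) = of_int \<lfloor>2^j * x\<rfloor>" using assms by simp
  have a: "2^j * x < of_int \<lfloor>2^j * x\<rfloor> + 1" by linarith
  have b: "of_int \<lfloor>2^j * x\<rfloor> \<le> 2^j * x" by linarith
  show "x < real (kk j x) / 2^j" unfolding kk_def using a f p by (simp add: field_simps)
  show "real (kk j x) / 2^j \<le> x + 1 / 2^j" unfolding kk_def using b f p by (simp add: field_simps)
qed

lemma kk_iff:
  assumes "0 \<le> x" "1 \<le> k"
  shows "kk j x = k \<longleftrightarrow> (x < real k / 2^j \<and> \<not> x < (real k - 1) / 2^j)"
proof -
  have p: "(0::real) < 2^j" by simp
  have "kk j x = k \<longleftrightarrow> \<lfloor>2^j * x\<rfloor> = int k - 1"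
    unfolding kk_def using assms by (auto simp: nat_eq_iff)
  also have "\<dots> \<longleftrightarrow> (real k - 1 \<le> 2^j * x \<and> 2^j * x < real k)"
    by (simp add: floor_eq_iff)
  also have "\<dots> \<longleftrightarrow> (x < real k / 2^j \<and> \<not> x < (real k - 1) / 2^j)"
    using p by (auto simp: field_simps)
  finally show ?thesis .
qed

lemma kk_mono: "0 \<le> x \<Longrightarrow> x \<le> y \<Longrightarrow> kk j x \<le> kk j y"
  unfolding kk_def by (simp add: floor_mono nat_mono)

context
  fixes Q :: "'a measure" and G :: "real \<Rightarrow> 'a measure" and N :: "real \<Rightarrow> 'a \<Rightarrow> real"
  assumes Q: "prob_space Q"
    and sub: "\<And>u. 0 \<le> u \<Longrightarrow> subalgebra Q (G u)"
    and mono: "\<And>u v. 0 \<le> u \<Longrightarrow> u \<le> v \<Longrightarrow> sets (G u) \<subseteq> sets (G v)"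
    and adp: "\<And>u. 0 \<le> u \<Longrightarrow> N u \<in> borel_measurable (G u)"
    and intg: "\<And>u. 0 \<le> u \<Longrightarrow> integrable Q (N u)"
    and mart: "\<And>u v A. 0 \<le> u \<Longrightarrow> u \<le> v \<Longrightarrow> A \<in> sets (G u) \<Longrightarrow>
                 (\<integral>x. indicator A x * N v x \<partial>Q) = (\<integral>x. indicator A x * N u x \<partial>Q)"
    and pos: "\<And>u \<omega>. 0 \<le> u \<Longrightarrow> \<omega> \<in> space Q \<Longrightarrow> 0 \<le> N u \<omega>"
    and rc: "\<And>u \<omega>. 0 \<le> u \<Longrightarrow> \<omega> \<in> space Q \<Longrightarrow> continuous (at_right u) (\<lambda>s. N s \<omega>)"
begin

lemma G_sets_Q: "0 \<le> u \<Longrightarrow> A \<in> sets (G u) \<Longrightarrow> A \<in> sets Q"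
  using sub unfolding subalgebra_def by auto

lemma G_space: "0 \<le> u \<Longrightarrow> space (G u) = space Q"
  using sub unfolding subalgebra_def by auto

lemma N_meas: "0 \<le> u \<Longrightarrow> N u \<in> borel_measurable Q"
  using measurable_from_subalg[OF sub adp] by auto

lemma submart_trunc:
  assumes "0 \<le> v" "v \<le> t" "B \<in> sets (G v)"
  shows "(\<integral>x. indicator B x * max (N v x - K) 0 \<partial>Q) \<le> (\<integral>x. indicator B x * max (N t x - K) 0 \<partial>Q)"
proof -
  interpret prob_space Q by (rule Q)
  have t0: "0 \<le> t" using assms by simp
  define C where "C = B \<inter> {\<omega>\<in>space Q. N v \<omega> > K}"
  have "{\<omega>\<in>space (G v). N v \<omega> > K} \<in> sets (G v)"
    using adp[OF assms(1)] by measurable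
  then have C: "C \<in> sets (G v)" unfolding C_def using G_space[OF assms(1)] assms(3) by auto
  have CQ: "C \<in> sets Q" using G_sets_Q[OF assms(1) C] .
  have BQ: "B \<in> sets Q" using G_sets_Q[OF assms(1) assms(3)] .
  have Bsp: "B \<subseteq> space Q" using sets.sets_into_space[OF BQ] .
  have iv: "integrable Q (N v)" "integrable Q (N t)" using intg assms t0 by auto
  have eq1: "(\<lambda>x. indicator B x * max (N v x - K) 0) = (\<lambda>x. indicator C x * N v x - K * indicator C x)"
    by (rule ext) (auto simp: C_def indicator_def Bsp split: split_max dest: subsetD[OF Bsp])
  have "(\<integral>x. indicator B x * max (N v x - K) 0 \<partial>Q) = (\<integral>x. indicator C x * N v x \<partial>Q) - K * measure Q C"
    unfolding eq1
  proof -
    have i1: "integrable Q (\<lambda>x. indicator C x * N v x)"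
      using integrable_mult_indicator[OF CQ iv(1)] by simp
    have i2: "integrable Q (\<lambda>x. K * indicator C x)"
      using CQ by (intro integrable_mult_right) (auto simp: emeasure_eq_measure)
    show "(\<integral>x. indicator C x * N v x - K * indicator C x \<partial>Q) = (\<integral>x. indicator C x * N v x \<partial>Q) - K * measure Q C"
      using Bochner_Integration.integral_diff[OF i1 i2] CQ by simp
  qed
  also have "\<dots> = (\<integral>x. indicator C x * N t x \<partial>Q) - K * measure Q C"
    using mart[OF assms(1,2) C] by simp
  also have "\<dots> = (\<integral>x. indicator C x * (N t x - K) \<partial>Q)"
  proof -
    have i1: "integrable Q (\<lambda>x. indicator C x * N t x)"
      using integrable_mult_indicator[OF CQ iv(2)] by simp
    have i2: "integrable Q (\<lambda>x. K * indicator C x)"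
      using CQ by (intro integrable_mult_right) (auto simp: emeasure_eq_measure)
    have "(\<lambda>x. indicator C x * (N t x - K)) = (\<lambda>x. indicator C x * N t x - K * indicator C x)"
      by (auto simp: algebra_simps)
    then show ?thesis
      using Bochner_Integration.integral_diff[OF i1 i2] CQ by simp
  qed
  also have "\<dots> \<le> (\<integral>x. indicator B x * max (N t x - K) 0 \<partial>Q)"
  proof (rule integral_mono)
    show "integrable Q (\<lambda>x. indicator C x * (N t x - K))"
      using integrable_mult_indicator[OF CQ Bochner_Integration.integrable_diff[OF iv(2) integrable_const[of K]]] by simp
    show "integrable Q (\<lambda>x. indicator B x * max (N t x - K) 0)"
      using integrable_mult_indicator[OF BQ integrable_max[OF Bochner_Integration.integrable_diff[OF iv(2) integrable_const[of K]] integrable_const[of 0]]] by simp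
    show "indicator C x * (N t x - K) \<le> indicator B x * max (N t x - K) 0" for x
      by (auto simp: C_def indicator_def)
  qed
  finally show ?thesis .
qed



context
  fixes t :: real and \<theta> :: "'a \<Rightarrow> real" and A :: "'a set"
  assumes t0: "0 \<le> t"
    and th: "\<And>\<omega>. \<omega> \<in> space Q \<Longrightarrow> 0 \<le> \<theta> \<omega> \<and> \<theta> \<omega> \<le> t"
    and Asp: "A \<subseteq> space Q"
    and hA: "\<And>u. 0 \<le> u \<Longrightarrow> {\<omega>\<in>A. \<theta> \<omega> \<le> u} \<in> sets (G u)"
begin

lemma lt_meas:
  assumes "0 \<le> a"
  shows "{\<omega>\<in>A. \<theta> \<omega> < a} \<in> sets (G (min a t))"
proof (cases "t < a")
  case True
  then have "{\<omega>\<in>A. \<theta> \<omega> < a} = {\<omega>\<in>A. \<theta> \<omega> \<le> t}" using th Asp by force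
  then show ?thesis using hA[OF t0] True by simp
next
  case False
  have "{\<omega>\<in>A. \<theta> \<omega> < a} = (\<Union>m. {\<omega>\<in>A. \<theta> \<omega> \<le> a - 1 / Suc m})"
  proof (intro set_eqI iffI)
    fix x assume x: "x \<in> {\<omega>\<in>A. \<theta> \<omega> < a}"
    then have "0 < a - \<theta> x" by auto
    then obtain m where "inverse (real (Suc m)) < a - \<theta> x"
      using reals_Archimedean by blast
    then have "1 / Suc m < a - \<theta> x" by (simp add: inverse_eq_divide)
    then show "x \<in> (\<Union>m. {\<omega>\<in>A. \<theta> \<omega> \<le> a - 1 / Suc m})" using x by (auto intro!: exI[of _ m])
  next
    fix x assume "x \<in> (\<Union>m. {\<omega>\<in>A. \<theta> \<omega> \<le> a - 1 / Suc m})"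
    then obtain m where "x \<in> A" "\<theta> x \<le> a - 1 / Suc m" by auto
    moreover have "0 < 1 / real (Suc m)" by simp
    ultimately have "\<theta> x < a" by linarith
    then show "x \<in> {\<omega>\<in>A. \<theta> \<omega> < a}" using \<open>x \<in> A\<close> by auto
  qed
  moreover have "{\<omega>\<in>A. \<theta> \<omega> \<le> a - 1 / Suc m} \<in> sets (G a)" for m
  proof (cases "a - 1 / Suc m < 0")
    case True
    then have e: "{\<omega>\<in>A. \<theta> \<omega> \<le> a - 1 / Suc m} = {}" using th Asp by force
    show ?thesis unfolding e by (rule sets.empty_sets)
  next
    case False
    then show ?thesis using hA[of "a - 1 / Suc m"] mono[of "a - 1 / Suc m" a] by auto
  qed
  ultimately show ?thesis using False by auto
qed

definition BB :: "nat \<Rightarrow> nat \<Rightarrow> 'a set" where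
  "BB j k = {\<omega>\<in>A. \<theta> \<omega> < real k / 2^j} - {\<omega>\<in>A. \<theta> \<omega> < (real k - 1) / 2^j}"

definition vv :: "nat \<Rightarrow> nat \<Rightarrow> real" where "vv j k = min t (real k / 2^j)"

lemma vv_nonneg: "0 \<le> vv j k" unfolding vv_def using t0 by simp

lemma vv_le: "vv j k \<le> t" unfolding vv_def by simp

lemma BB_meas:
  assumes "1 \<le> k"
  shows "BB j k \<in> sets (G (vv j k))"
proof -
  have a: "{\<omega>\<in>A. \<theta> \<omega> < real k / 2^j} \<in> sets (G (vv j k))"
    using lt_meas[of "real k / 2^j"] unfolding vv_def by (simp add: min.commute)
  have "{\<omega>\<in>A. \<theta> \<omega> < (real k - 1) / 2^j} \<in> sets (G (min ((real k - 1) / 2^j) t))"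
    using lt_meas[of "(real k - 1) / 2^j"] assms by simp
  moreover have "sets (G (min ((real k - 1) / 2^j) t)) \<subseteq> sets (G (vv j k))"
  proof (intro mono)
    have "(real k - 1) / 2^j \<le> real k / 2^j" by (simp add: divide_right_mono)
    then show "min ((real k - 1) / 2^j) t \<le> vv j k" unfolding vv_def by (auto simp: min_def)
    show "0 \<le> min ((real k - 1) / 2^j) t" using assms t0 by simp
  qed
  ultimately have b: "{\<omega>\<in>A. \<theta> \<omega> < (real k - 1) / 2^j} \<in> sets (G (vv j k))" by auto
  show ?thesis unfolding BB_def using a b by auto
qed

lemma BB_iff:
  assumes "\<omega> \<in> space Q" "1 \<le> k"
  shows "\<omega> \<in> BB j k \<longleftrightarrow> \<omega> \<in> A \<and> kk j (\<theta> \<omega>) = k"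
  using kk_iff[of "\<theta> \<omega>" k j] th[OF assms(1)] assms(2) unfolding BB_def by auto

lemma kk_range: "\<omega> \<in> space Q \<Longrightarrow> kk j (\<theta> \<omega>) \<in> {1..kk j t}"
  using kk_mono[of "\<theta> \<omega>" t j] th[of \<omega>] by (auto simp: kk_def)

lemma repr:
  fixes h :: "real \<Rightarrow> 'a \<Rightarrow> real"
  assumes "\<omega> \<in> space Q"
  shows "indicator A \<omega> * h (min t (real (kk j (\<theta> \<omega>)) / 2^j)) \<omega>
       = (\<Sum>k\<in>{1..kk j t}. indicator (BB j k) \<omega> * h (vv j k) \<omega>)"
proof (cases "\<omega> \<in> A")
  case True
  have "(\<Sum>k\<in>{1..kk j t}. indicator (BB j k) \<omega> * h (vv j k) \<omega>)
      = (\<Sum>k\<in>{1..kk j t}. (if k = kk j (\<theta> \<omega>) then h (vv j k) \<omega> else 0))"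
    by (intro sum.cong refl) (simp add: BB_iff[OF assms] True split: split_indicator)
  also have "\<dots> = h (vv j (kk j (\<theta> \<omega>))) \<omega>"
    using kk_range[OF assms] by (simp add: sum.delta')
  finally show ?thesis using True by (simp add: vv_def)
next
  case False
  then have "\<omega> \<notin> BB j k" for k unfolding BB_def by auto
  then show ?thesis using False by simp
qed

lemma sum_ind:
  assumes "\<omega> \<in> space Q"
  shows "(\<Sum>k\<in>{1..kk j t}. indicator (BB j k) \<omega> * f \<omega>) = indicator A \<omega> * (f \<omega>::real)"
proof -
  have "indicator A \<omega> * 1 = (\<Sum>k\<in>{1..kk j t}. indicator (BB j k) \<omega> * (1::real))"
    using repr[OF assms, of "\<lambda>_ _. 1" j] by simp
  then show ?thesis by (simp add: sum_distrib_right[symmetric])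
qed

definition dj :: "nat \<Rightarrow> 'a \<Rightarrow> real" where "dj j \<omega> = min t (real (kk j (\<theta> \<omega>)) / 2^j)"

lemma dj_props:
  assumes "\<omega> \<in> space Q"
  shows "\<theta> \<omega> \<le> dj j \<omega>" "dj j \<omega> \<le> \<theta> \<omega> + 1/2^j" "dj j \<omega> \<le> t" "0 \<le> dj j \<omega>"
  using kk_bounds[of "\<theta> \<omega>" j] th[OF assms] unfolding dj_def by auto

lemma BB_Q: "1 \<le> k \<Longrightarrow> BB j k \<in> sets Q"
  using BB_meas[of k j] G_sets_Q[OF vv_nonneg] by blast

lemma A_Q: "A \<in> sets Q"
proof -
  have "{\<omega>\<in>A. \<theta> \<omega> \<le> t} = A" using th Asp by auto
  then show ?thesis using hA[OF t0] G_sets_Q[OF t0] by metis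
qed

lemma gj_int:
  shows "integrable Q (\<lambda>\<omega>. indicator A \<omega> * N (dj j \<omega>) \<omega>)"
    "(\<integral>\<omega>. indicator A \<omega> * N (dj j \<omega>) \<omega> \<partial>Q) = (\<integral>\<omega>. indicator A \<omega> * N t \<omega> \<partial>Q)"
proof -
  have eq: "\<And>\<omega>. \<omega> \<in> space Q \<Longrightarrow> indicator A \<omega> * N (dj j \<omega>) \<omega>
       = (\<Sum>k\<in>{1..kk j t}. indicator (BB j k) \<omega> * N (vv j k) \<omega>)"
    unfolding dj_def by (rule repr)
  have ik: "integrable Q (\<lambda>\<omega>. indicator (BB j k) \<omega> * N (v::real) \<omega>)" if "1 \<le> k" "0 \<le> v" for k v
    using integrable_mult_indicator[OF BB_Q[OF that(1)] intg[OF that(2)]] by simp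
  have isum: "integrable Q (\<lambda>\<omega>. \<Sum>k\<in>{1..kk j t}. indicator (BB j k) \<omega> * N (vv j k) \<omega>)"
    using ik vv_nonneg by (intro Bochner_Integration.integrable_sum) auto
  show "integrable Q (\<lambda>\<omega>. indicator A \<omega> * N (dj j \<omega>) \<omega>)"
    using isum by (subst Bochner_Integration.integrable_cong[OF refl eq]) auto
  have "(\<integral>\<omega>. indicator A \<omega> * N (dj j \<omega>) \<omega> \<partial>Q)
      = (\<integral>\<omega>. (\<Sum>k\<in>{1..kk j t}. indicator (BB j k) \<omega> * N (vv j k) \<omega>) \<partial>Q)"
    by (rule Bochner_Integration.integral_cong[OF refl eq])
  also have "\<dots> = (\<Sum>k\<in>{1..kk j t}. (\<integral>\<omega>. indicator (BB j k) \<omega> * N (vv j k) \<omega> \<partial>Q))"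
    using ik vv_nonneg by (intro Bochner_Integration.integral_sum) auto
  also have "\<dots> = (\<Sum>k\<in>{1..kk j t}. (\<integral>\<omega>. indicator (BB j k) \<omega> * N t \<omega> \<partial>Q))"
    by (intro sum.cong refl mart[symmetric] vv_nonneg vv_le BB_meas) auto
  also have "\<dots> = (\<integral>\<omega>. (\<Sum>k\<in>{1..kk j t}. indicator (BB j k) \<omega> * N t \<omega>) \<partial>Q)"
    using ik t0 by (intro Bochner_Integration.integral_sum[symmetric]) auto
  also have "\<dots> = (\<integral>\<omega>. indicator A \<omega> * N t \<omega> \<partial>Q)"
    by (rule Bochner_Integration.integral_cong[OF refl sum_ind])
  finally show "(\<integral>\<omega>. indicator A \<omega> * N (dj j \<omega>) \<omega> \<partial>Q) = (\<integral>\<omega>. indicator A \<omega> * N t \<omega> \<partial>Q)" .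
qed

lemma trunc_bound:
  assumes K: "0 \<le> K"
  shows "integrable Q (\<lambda>\<omega>. max (indicator A \<omega> * N (dj j \<omega>) \<omega> - K) 0)"
    "(\<integral>\<omega>. max (indicator A \<omega> * N (dj j \<omega>) \<omega> - K) 0 \<partial>Q) \<le> (\<integral>\<omega>. max (N t \<omega> - K) 0 \<partial>Q)"
proof -
  interpret prob_space Q by (rule Q)
  have eq: "\<And>\<omega>. \<omega> \<in> space Q \<Longrightarrow> max (indicator A \<omega> * N (dj j \<omega>) \<omega> - K) 0
       = (\<Sum>k\<in>{1..kk j t}. indicator (BB j k) \<omega> * max (N (vv j k) \<omega> - K) 0)"
  proof -
    fix \<omega> assume w: "\<omega> \<in> space Q"
    have "max (indicator A \<omega> * N (dj j \<omega>) \<omega> - K) 0 = indicator A \<omega> * max (N (dj j \<omega>) \<omega> - K) 0"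
      using K by (auto split: split_indicator)
    also have "\<dots> = (\<Sum>k\<in>{1..kk j t}. indicator (BB j k) \<omega> * max (N (vv j k) \<omega> - K) 0)"
      unfolding dj_def by (rule repr[OF w, of "\<lambda>u \<omega>. max (N u \<omega> - K) 0"])
    finally show "max (indicator A \<omega> * N (dj j \<omega>) \<omega> - K) 0
       = (\<Sum>k\<in>{1..kk j t}. indicator (BB j k) \<omega> * max (N (vv j k) \<omega> - K) 0)" .
  qed
  have im: "integrable Q (\<lambda>\<omega>. max (N v \<omega> - K) 0)" if "0 \<le> v" for v
    using integrable_max[OF Bochner_Integration.integrable_diff[OF intg[OF that] integrable_const[of K]] integrable_const[of 0]] .
  have ik: "integrable Q (\<lambda>\<omega>. indicator (BB j k) \<omega> * max (N (v::real) \<omega> - K) 0)" if "1 \<le> k" "0 \<le> v" for k v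
    using integrable_mult_indicator[OF BB_Q[OF that(1)] im[OF that(2)]] by simp
  show "integrable Q (\<lambda>\<omega>. max (indicator A \<omega> * N (dj j \<omega>) \<omega> - K) 0)"
  proof -
    have isum: "integrable Q (\<lambda>\<omega>. \<Sum>k\<in>{1..kk j t}. indicator (BB j k) \<omega> * max (N (vv j k) \<omega> - K) 0)"
      using ik vv_nonneg by (intro Bochner_Integration.integrable_sum) auto
    then show ?thesis by (subst Bochner_Integration.integrable_cong[OF refl eq]) auto
  qed
  have "(\<integral>\<omega>. max (indicator A \<omega> * N (dj j \<omega>) \<omega> - K) 0 \<partial>Q)
      = (\<Sum>k\<in>{1..kk j t}. (\<integral>\<omega>. indicator (BB j k) \<omega> * max (N (vv j k) \<omega> - K) 0 \<partial>Q))"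
  proof -
    have "(\<integral>\<omega>. max (indicator A \<omega> * N (dj j \<omega>) \<omega> - K) 0 \<partial>Q)
      = (\<integral>\<omega>. (\<Sum>k\<in>{1..kk j t}. indicator (BB j k) \<omega> * max (N (vv j k) \<omega> - K) 0) \<partial>Q)"
      by (rule Bochner_Integration.integral_cong[OF refl eq])
    also have "\<dots> = (\<Sum>k\<in>{1..kk j t}. (\<integral>\<omega>. indicator (BB j k) \<omega> * max (N (vv j k) \<omega> - K) 0 \<partial>Q))"
      using ik vv_nonneg by (intro Bochner_Integration.integral_sum) auto
    finally show ?thesis .
  qed
  also have "\<dots> \<le> (\<Sum>k\<in>{1..kk j t}. (\<integral>\<omega>. indicator (BB j k) \<omega> * max (N t \<omega> - K) 0 \<partial>Q))"
    by (intro sum_mono submart_trunc vv_nonneg vv_le BB_meas) auto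
  also have "\<dots> = (\<integral>\<omega>. (\<Sum>k\<in>{1..kk j t}. indicator (BB j k) \<omega> * max (N t \<omega> - K) 0) \<partial>Q)"
    using ik t0 by (intro Bochner_Integration.integral_sum[symmetric]) auto
  also have "\<dots> = (\<integral>\<omega>. indicator A \<omega> * max (N t \<omega> - K) 0 \<partial>Q)"
    by (rule Bochner_Integration.integral_cong[OF refl sum_ind])
  also have "\<dots> \<le> (\<integral>\<omega>. max (N t \<omega> - K) 0 \<partial>Q)"
    using integrable_mult_indicator[OF A_Q im[OF t0]] im[OF t0]
    by (intro integral_mono) (auto split: split_indicator)
  finally show "(\<integral>\<omega>. max (indicator A \<omega> * N (dj j \<omega>) \<omega> - K) 0 \<partial>Q) \<le> (\<integral>\<omega>. max (N t \<omega> - K) 0 \<partial>Q)" .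
qed

lemma dj_conv:
  assumes w: "\<omega> \<in> space Q"
  shows "(\<lambda>j. N (dj j \<omega>) \<omega>) \<longlonglongrightarrow> N (\<theta> \<omega>) \<omega>"
proof (rule tendstoI)
  fix e :: real assume e: "0 < e"
  have "((\<lambda>s. N s \<omega>) \<longlongrightarrow> N (\<theta> \<omega>) \<omega>) (at_right (\<theta> \<omega>))"
    using rc[of "\<theta> \<omega>" \<omega>] th[OF w] w by (simp add: continuous_within)
  from tendstoD[OF this e] obtain b where b: "\<theta> \<omega> < b"
      and bb: "\<And>y. \<theta> \<omega> < y \<Longrightarrow> y < b \<Longrightarrow> dist (N y \<omega>) (N (\<theta> \<omega>) \<omega>) < e"
    unfolding eventually_at_right_field by blast
  obtain J where J: "(1/2::real) ^ J < b - \<theta> \<omega>"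
    using real_arch_pow_inv[of "b - \<theta> \<omega>" "1/2::real"] b by auto
  show "\<forall>\<^sub>F j in sequentially. dist (N (dj j \<omega>) \<omega>) (N (\<theta> \<omega>) \<omega>) < e"
  proof (rule eventually_sequentiallyI[of J])
    fix j assume "J \<le> j"
    then have "(1/2::real) ^ j \<le> (1/2) ^ J" by (intro power_decreasing) auto
    then have "dj j \<omega> < b" using dj_props(2)[OF w, of j] J by (simp add: power_one_over)
    moreover have "\<theta> \<omega> \<le> dj j \<omega>" using dj_props(1)[OF w] .
    ultimately show "dist (N (dj j \<omega>) \<omega>) (N (\<theta> \<omega>) \<omega>) < e"
      using bb e by (cases "\<theta> \<omega> = dj j \<omega>") auto
  qed
qed

lemma OS:
  shows "integrable Q (\<lambda>\<omega>. indicator A \<omega> * N (\<theta> \<omega>) \<omega>)"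
    "(\<integral>\<omega>. indicator A \<omega> * N (\<theta> \<omega>) \<omega> \<partial>Q) = (\<integral>\<omega>. indicator A \<omega> * N t \<omega> \<partial>Q)"
proof -
  interpret prob_space Q by (rule Q)
  define g where "g j \<omega> = indicator A \<omega> * N (dj j \<omega>) \<omega>" for j \<omega>
  define gl where "gl \<omega> = indicator A \<omega> * N (\<theta> \<omega>) \<omega>" for \<omega>
  define c where "c = (\<integral>\<omega>. indicator A \<omega> * N t \<omega> \<partial>Q)"
  define e where "e K = (\<integral>\<omega>. max (N t \<omega> - K) 0 \<partial>Q)" for K
  have gint: "integrable Q (g j)" "integral\<^sup>L Q (g j) = c" for j
    unfolding g_def c_def using gj_int by auto
  have gpos: "\<omega> \<in> space Q \<Longrightarrow> 0 \<le> g j \<omega>" for j \<omega>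
    unfolding g_def using pos[OF dj_props(4)] by auto
  have glpos: "\<omega> \<in> space Q \<Longrightarrow> 0 \<le> gl \<omega>" for \<omega>
    unfolding gl_def using pos th by auto
  have glim: "\<omega> \<in> space Q \<Longrightarrow> (\<lambda>j. g j \<omega>) \<longlonglongrightarrow> gl \<omega>" for \<omega>
    unfolding g_def gl_def by (intro tendsto_mult tendsto_const dj_conv)
  have gmeas: "g j \<in> borel_measurable Q" for j using gint(1) by auto
  have glmeas: "gl \<in> borel_measurable Q"
    by (rule borel_measurable_LIMSEQ_real[OF glim gmeas])
  have int_min: "integrable Q (\<lambda>\<omega>. min (gl \<omega>) K)" and
    lim_min: "(\<lambda>j. \<integral>\<omega>. min (g j \<omega>) K \<partial>Q) \<longlonglongrightarrow> (\<integral>\<omega>. min (gl \<omega>) K \<partial>Q)" if K: "0 \<le> K" for K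
  proof -
    have a: "(\<lambda>\<omega>. min (gl \<omega>) K) \<in> borel_measurable Q" using glmeas by measurable
    have b: "(\<lambda>\<omega>. min (g j \<omega>) K) \<in> borel_measurable Q" for j using gmeas by measurable
    have c: "AE \<omega> in Q. (\<lambda>j. min (g j \<omega>) K) \<longlonglongrightarrow> min (gl \<omega>) K"
      by (intro AE_I2 tendsto_min glim tendsto_const)
    have d: "AE \<omega> in Q. norm (min (g j \<omega>) K) \<le> K" for j
      using gpos K by (intro AE_I2) auto
    show "integrable Q (\<lambda>\<omega>. min (gl \<omega>) K)"
      by (rule integrable_dominated_convergence[OF a b integrable_const c d])
    show "(\<lambda>j. \<integral>\<omega>. min (g j \<omega>) K \<partial>Q) \<longlonglongrightarrow> (\<integral>\<omega>. min (gl \<omega>) K \<partial>Q)"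
      by (rule integral_dominated_convergence[OF a b integrable_const c d])
  qed
  have up: "(\<integral>\<omega>. min (gl \<omega>) K \<partial>Q) \<le> c" if K: "0 \<le> K" for K
  proof (rule LIMSEQ_le_const2[OF lim_min[OF K]])
    show "\<exists>N. \<forall>n\<ge>N. (\<integral>\<omega>. min (g n \<omega>) K \<partial>Q) \<le> c"
    proof (intro exI allI impI)
      fix n
      have "(\<integral>\<omega>. min (g n \<omega>) K \<partial>Q) \<le> integral\<^sup>L Q (g n)"
        using gint(1)[of n] by (intro integral_mono) auto
      then show "(\<integral>\<omega>. min (g n \<omega>) K \<partial>Q) \<le> c" using gint(2) by simp
    qed
  qed
  have low: "c - e K \<le> (\<integral>\<omega>. min (gl \<omega>) K \<partial>Q)" if K: "0 \<le> K" for K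
  proof (rule LIMSEQ_le_const[OF lim_min[OF K]])
    show "\<exists>N. \<forall>n\<ge>N. c - e K \<le> (\<integral>\<omega>. min (g n \<omega>) K \<partial>Q)"
    proof (intro exI allI impI)
      fix n
      have i1: "integrable Q (\<lambda>\<omega>. min (g n \<omega>) K)" using gint(1)[of n] by auto
      have i2: "integrable Q (\<lambda>\<omega>. max (g n \<omega> - K) 0)" unfolding g_def using trunc_bound(1)[OF K] .
      have "c = integral\<^sup>L Q (g n)" using gint(2) by simp
      also have "\<dots> = (\<integral>\<omega>. min (g n \<omega>) K + max (g n \<omega> - K) 0 \<partial>Q)"
        by (intro Bochner_Integration.integral_cong) (auto simp: min_def max_def)
      also have "\<dots> = (\<integral>\<omega>. min (g n \<omega>) K \<partial>Q) + (\<integral>\<omega>. max (g n \<omega> - K) 0 \<partial>Q)"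
        using i1 i2 by (rule Bochner_Integration.integral_add)
      also have "\<dots> \<le> (\<integral>\<omega>. min (g n \<omega>) K \<partial>Q) + e K"
        using trunc_bound(2)[OF K, of n] unfolding g_def e_def by simp
      finally show "c - e K \<le> (\<integral>\<omega>. min (g n \<omega>) K \<partial>Q)" by simp
    qed
  qed
  define f where "f m \<omega> = min (gl \<omega>) (real m)" for m \<omega>
  define L where "L = (SUP m. \<integral>\<omega>. f m \<omega> \<partial>Q)"
  have fint: "integrable Q (f m)" for m unfolding f_def by (rule int_min) simp
  have inc: "incseq (\<lambda>m. \<integral>\<omega>. f m \<omega> \<partial>Q)"
    unfolding incseq_def f_def using fint unfolding f_def
    by (auto intro!: integral_mono)
  have bdd: "bdd_above (range (\<lambda>m. \<integral>\<omega>. f m \<omega> \<partial>Q))"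
    using up unfolding f_def by (intro bdd_aboveI2[where M=c]) auto
  have fL: "(\<lambda>m. \<integral>\<omega>. f m \<omega> \<partial>Q) \<longlonglongrightarrow> L"
    unfolding L_def by (rule LIMSEQ_incseq_SUP[OF bdd inc])
  have fmono: "AE \<omega> in Q. mono (\<lambda>m. f m \<omega>)"
    unfolding f_def by (intro AE_I2) (auto simp: mono_def)
  have flim: "AE \<omega> in Q. (\<lambda>m. f m \<omega>) \<longlonglongrightarrow> gl \<omega>"
  proof (intro AE_I2)
    fix \<omega>
    obtain M where "gl \<omega> \<le> real M" using real_arch_simple by blast
    then have "\<forall>m\<ge>M. f m \<omega> = gl \<omega>" unfolding f_def
      by (auto simp: min_def)
    then show "(\<lambda>m. f m \<omega>) \<longlonglongrightarrow> gl \<omega>"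
      by (intro tendsto_eventually) (auto simp: eventually_sequentially)
  qed
  have glint: "integrable Q gl" and glL: "integral\<^sup>L Q gl = L"
    using integrable_monotone_convergence[OF fint fmono flim fL glmeas]
      integral_monotone_convergence[OF fint fmono flim fL glmeas] by auto
  have "L \<le> c" unfolding L_def using up unfolding f_def by (intro cSUP_least) auto
  moreover have "c \<le> L"
  proof -
    have e0: "(\<lambda>m. e (real m)) \<longlonglongrightarrow> 0"
    proof -
      have "(\<lambda>m. \<integral>\<omega>. max (N t \<omega> - real m) 0 \<partial>Q) \<longlonglongrightarrow> (\<integral>\<omega>. 0 \<partial>Q)"
      proof (rule integral_dominated_convergence[where w="\<lambda>\<omega>. norm (N t \<omega>)"])
        show "(\<lambda>\<omega>. 0::real) \<in> borel_measurable Q" by simp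
        show "(\<lambda>\<omega>. max (N t \<omega> - real m) 0) \<in> borel_measurable Q" for m
          using N_meas[OF t0] by measurable
        show "integrable Q (\<lambda>\<omega>. norm (N t \<omega>))" using intg[OF t0] by auto
        show "AE \<omega> in Q. (\<lambda>m. max (N t \<omega> - real m) 0) \<longlonglongrightarrow> 0"
        proof (intro AE_I2)
          fix \<omega>
          obtain M where "N t \<omega> \<le> real M" using real_arch_simple by blast
          then have "\<forall>m\<ge>M. max (N t \<omega> - real m) 0 = 0"
            by (auto simp: max_def)
          then show "(\<lambda>m. max (N t \<omega> - real m) 0) \<longlonglongrightarrow> 0"
            by (intro tendsto_eventually) (auto simp: eventually_sequentially)
        qed
        show "AE \<omega> in Q. norm (max (N t \<omega> - real m) 0) \<le> norm (N t \<omega>)" for m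
          by (intro AE_I2) auto
      qed
      then show ?thesis unfolding e_def by simp
    qed
    have "(\<lambda>m. c - e (real m)) \<longlonglongrightarrow> c - 0" by (intro tendsto_diff tendsto_const e0)
    moreover have "c - e (real m) \<le> L" for m
    proof -
      have "c - e (real m) \<le> (\<integral>\<omega>. f m \<omega> \<partial>Q)" unfolding f_def by (rule low) simp
      also have "\<dots> \<le> L" unfolding L_def by (intro cSUP_upper bdd) auto
      finally show ?thesis .
    qed
    ultimately show "c \<le> L" by (intro LIMSEQ_le_const2) auto
  qed
  ultimately show "integrable Q (\<lambda>\<omega>. indicator A \<omega> * N (\<theta> \<omega>) \<omega>)"
    "(\<integral>\<omega>. indicator A \<omega> * N (\<theta> \<omega>) \<omega> \<partial>Q) = (\<integral>\<omega>. indicator A \<omega> * N t \<omega> \<partial>Q)"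
    using glint glL unfolding gl_def c_def by auto
qed


end


lemma theta_set:
  fixes \<tau> :: "'a \<Rightarrow> ennreal"
  assumes st: "\<And>u. 0 \<le> u \<Longrightarrow> {\<omega>\<in>space Q. \<tau> \<omega> \<le> ennreal u} \<in> sets (G u)"
    and u0: "0 \<le> u" and v0: "0 \<le> v"
  shows "{\<omega>\<in>space Q. enn2real (min (\<tau> \<omega>) (ennreal u)) \<le> v} \<in> sets (G v)"
proof (cases "u \<le> v")
  case True
  then have "{\<omega>\<in>space Q. enn2real (min (\<tau> \<omega>) (ennreal u)) \<le> v} = space (G v)"
    using theta_le_iff[OF u0 v0, of \<tau>] G_space[OF v0] by auto
  then show ?thesis by simp
next
  case False
  then have "{\<omega>\<in>space Q. enn2real (min (\<tau> \<omega>) (ennreal u)) \<le> v} = {\<omega>\<in>space Q. \<tau> \<omega> \<le> ennreal v}"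
    using theta_le_iff[OF u0 v0, of \<tau>] by auto
  then show ?thesis using st[OF v0] by simp
qed

lemma stop_mart:
  fixes \<tau> :: "'a \<Rightarrow> ennreal"
  assumes st: "\<And>u. 0 \<le> u \<Longrightarrow> {\<omega>\<in>space Q. \<tau> \<omega> \<le> ennreal u} \<in> sets (G u)"
    and s0: "0 \<le> s" and st_le: "s \<le> t" and AG: "A \<in> sets (G s)"
  shows "integrable Q (stopped \<tau> N t)"
    "(\<integral>\<omega>. indicator A \<omega> * stopped \<tau> N t \<omega> \<partial>Q) = (\<integral>\<omega>. indicator A \<omega> * stopped \<tau> N s \<omega> \<partial>Q)"
proof -
  have t0: "0 \<le> t" using s0 st_le by simp
  define th where "th u \<omega> = enn2real (min (\<tau> \<omega>) (ennreal u))" for u \<omega>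
  have stq: "stopped \<tau> N u = (\<lambda>\<omega>. N (th u \<omega>) \<omega>)" if "0 \<le> u" for u
    using stopped_eq[OF that, of \<tau> N] unfolding th_def by (intro ext) auto
  have thp: "\<And>\<omega>. \<omega> \<in> space Q \<Longrightarrow> 0 \<le> th u \<omega> \<and> th u \<omega> \<le> u" if "0 \<le> u" for u
    using theta_props[OF that] unfolding th_def by auto
  have ths: "{\<omega>\<in>space Q. th u \<omega> \<le> v} \<in> sets (G v)" if "0 \<le> u" "0 \<le> v" for u v
    unfolding th_def by (rule theta_set[OF st that])
  have int: "integrable Q (stopped \<tau> N u)" if u0: "0 \<le> u" for u
  proof -
    have "integrable Q (\<lambda>\<omega>. indicator (space Q) \<omega> * N (th u \<omega>) \<omega>)"
      by (rule OS(1)[OF u0 thp[OF u0] order_refl]) (use ths[OF u0] in auto)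
    then show ?thesis unfolding stq[OF u0]
      by (rule Bochner_Integration.integrable_cong[THEN iffD1, rotated 2]) auto
  qed
  show "integrable Q (stopped \<tau> N t)" using int[OF t0] .
  have AQ: "A \<in> sets Q" using G_sets_Q[OF s0 AG] .
  have Asp: "A \<subseteq> space Q" using sets.sets_into_space[OF AQ] .
  define A1 where "A1 = A \<inter> {\<omega>\<in>space Q. \<not> \<tau> \<omega> \<le> ennreal s}"
  define A2 where "A2 = A \<inter> {\<omega>\<in>space Q. \<tau> \<omega> \<le> ennreal s}"
  have A2G: "A2 \<in> sets (G s)" unfolding A2_def using AG st[OF s0] by auto
  have A1G: "A1 \<in> sets (G s)"
  proof -
    have "A1 = A - {\<omega>\<in>space Q. \<tau> \<omega> \<le> ennreal s}" unfolding A1_def using Asp by auto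
    then show ?thesis using AG st[OF s0] by auto
  qed
  have A1Q: "A1 \<in> sets Q" and A2Q: "A2 \<in> sets Q" using G_sets_Q[OF s0] A1G A2G by auto
  have hA1: "{\<omega>\<in>A1. th t \<omega> \<le> v} \<in> sets (G v)" if v0: "0 \<le> v" for v
  proof (cases "s \<le> v")
    case True
    have "{\<omega>\<in>A1. th t \<omega> \<le> v} = A1 \<inter> {\<omega>\<in>space Q. th t \<omega> \<le> v}" unfolding A1_def by auto
    moreover have "A1 \<in> sets (G v)" using mono[OF s0 True] A1G by auto
    ultimately show ?thesis using ths[OF t0 v0] by auto
  next
    case False
    have e: "{\<omega>\<in>A1. th t \<omega> \<le> v} = {}"
    proof (safe)
      fix x assume x: "x \<in> A1" "th t x \<le> v"
      then have "t \<le> v \<or> \<tau> x \<le> ennreal v" using theta_le_iff[OF t0 v0, of \<tau>] unfolding th_def by auto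
      then have "\<tau> x \<le> ennreal s" using False st_le v0 by (auto intro: order_trans simp: ennreal_le_iff)
      then show "x \<in> {}" using x unfolding A1_def by auto
    qed
    show ?thesis unfolding e by (rule sets.empty_sets)
  qed
  have os: "(\<integral>\<omega>. indicator A1 \<omega> * N (th t \<omega>) \<omega> \<partial>Q) = (\<integral>\<omega>. indicator A1 \<omega> * N t \<omega> \<partial>Q)"
    using A1Q sets.sets_into_space by (intro OS(2)[OF t0 thp[OF t0] _ hA1]) auto
  have eq1: "indicator A1 \<omega> * stopped \<tau> N s \<omega> = indicator A1 \<omega> * N s \<omega>" for \<omega>
    using s0 by (auto simp: A1_def stopped_def split: split_indicator)
  have eq2: "indicator A2 \<omega> * stopped \<tau> N t \<omega> = indicator A2 \<omega> * stopped \<tau> N s \<omega>" for \<omega>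
  proof (cases "\<omega> \<in> A2")
    case True
    then have "\<tau> \<omega> \<le> ennreal s" unfolding A2_def by auto
    then have "min (\<tau> \<omega>) (ennreal t) = \<tau> \<omega>" "min (\<tau> \<omega>) (ennreal s) = \<tau> \<omega>"
      using st_le by (auto simp: min_def intro: order_trans ennreal_leI)
    then show ?thesis using stopped_eq[OF t0, of \<tau> N \<omega>] stopped_eq[OF s0, of \<tau> N \<omega>] by simp
  qed simp
  have split: "indicator A \<omega> * f \<omega> = indicator A1 \<omega> * f \<omega> + indicator A2 \<omega> * (f \<omega>::real)" for f \<omega>
    unfolding A1_def A2_def using Asp by (auto split: split_indicator)
  have iA: "integrable Q (\<lambda>\<omega>. indicator B \<omega> * stopped \<tau> N u \<omega>)" if "B \<in> sets Q" "0 \<le> u" for B u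
    using integrable_mult_indicator[OF that(1) int[OF that(2)]] by simp
  have "(\<integral>\<omega>. indicator A \<omega> * stopped \<tau> N t \<omega> \<partial>Q)
      = (\<integral>\<omega>. indicator A1 \<omega> * stopped \<tau> N t \<omega> \<partial>Q) + (\<integral>\<omega>. indicator A2 \<omega> * stopped \<tau> N t \<omega> \<partial>Q)"
    unfolding split[of _ "stopped \<tau> N t"] using iA[OF A1Q t0] iA[OF A2Q t0]
    by (rule Bochner_Integration.integral_add)
  also have "(\<integral>\<omega>. indicator A1 \<omega> * stopped \<tau> N t \<omega> \<partial>Q) = (\<integral>\<omega>. indicator A1 \<omega> * N s \<omega> \<partial>Q)"
    using os mart[OF s0 st_le A1G] unfolding stq[OF t0] by simp
  also have "\<dots> = (\<integral>\<omega>. indicator A1 \<omega> * stopped \<tau> N s \<omega> \<partial>Q)"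
    unfolding eq1 ..
  also have "(\<integral>\<omega>. indicator A2 \<omega> * stopped \<tau> N t \<omega> \<partial>Q) = (\<integral>\<omega>. indicator A2 \<omega> * stopped \<tau> N s \<omega> \<partial>Q)"
    unfolding eq2 ..
  also have "(\<integral>\<omega>. indicator A1 \<omega> * stopped \<tau> N s \<omega> \<partial>Q) + (\<integral>\<omega>. indicator A2 \<omega> * stopped \<tau> N s \<omega> \<partial>Q)
      = (\<integral>\<omega>. indicator A \<omega> * stopped \<tau> N s \<omega> \<partial>Q)"
    unfolding split[of _ "stopped \<tau> N s"] using iA[OF A1Q s0] iA[OF A2Q s0]
    by (rule Bochner_Integration.integral_add[symmetric])
  finally show "(\<integral>\<omega>. indicator A \<omega> * stopped \<tau> N t \<omega> \<partial>Q) = (\<integral>\<omega>. indicator A \<omega> * stopped \<tau> N s \<omega> \<partial>Q)" .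
qed

end




lemma mart_int:
  assumes Q: "prob_space Q" and sub: "\<And>u. 0 \<le> u \<Longrightarrow> subalgebra Q (H u)"
    and m: "martingale Q H Y" and s0: "0 \<le> s" and st: "s \<le> t" and A: "A \<in> sets (H s)"
  shows "(\<integral>x. indicator A x * Y t x \<partial>Q) = (\<integral>x. indicator A x * Y s x \<partial>Q)"
proof -
  interpret sigma_finite_subalgebra Q "H s" by (rule sfs_of_prob[OF Q sub[OF s0]])
  have t0: "0 \<le> t" using s0 st by simp
  have it: "integrable Q (Y t)" using m t0 unfolding martingale_def by auto
  have ms: "Y s \<in> borel_measurable Q"
    using m s0 unfolding martingale_def adapted_def by (auto intro: measurable_from_subalg[OF sub[OF s0]])
  have ae: "AE x in Q. real_cond_exp Q (H s) (Y t) x = Y s x" using m s0 st unfolding martingale_def by auto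
  have "(\<integral>x. indicator A x * Y t x \<partial>Q) = (\<integral>x\<in>A. Y t x \<partial>Q)"
    by (simp add: set_lebesgue_integral_def)
  also have "\<dots> = (\<integral>x\<in>A. real_cond_exp Q (H s) (Y t) x \<partial>Q)"
    by (rule real_cond_exp_intA[OF it A])
  also have "\<dots> = (\<integral>x. indicator A x * Y s x \<partial>Q)"
  proof -
    have AQ[measurable]: "A \<in> sets Q" using sub[OF s0] A unfolding subalgebra_def by auto
    note ms[measurable]
    show ?thesis unfolding set_lebesgue_integral_def using ae
      by (intro integral_cong_AE) auto
  qed
  finally show ?thesis .
qed

lemma stopped_rc:
  assumes rc: "\<And>u. 0 \<le> u \<Longrightarrow> continuous (at_right u) (\<lambda>s. X s \<omega>)" and u0: "0 \<le> u"
  shows "continuous (at_right u) (\<lambda>s. stopped \<sigma> X s \<omega>)"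
proof (cases "ennreal u < \<sigma> \<omega>")
  case True
  obtain b where b: "u < b" and bb: "\<And>s. s < b \<Longrightarrow> ennreal s \<le> \<sigma> \<omega>"
  proof (cases "\<sigma> \<omega> = \<infinity>")
    case True
    then show ?thesis using that[of "u + 1"] by auto
  next
    case False
    then obtain r where r: "\<sigma> \<omega> = ennreal r" "0 \<le> r" by (cases "\<sigma> \<omega>" rule: ennreal_cases) auto
    then have "u < r" using \<open>ennreal u < \<sigma> \<omega>\<close> u0 by (simp add: ennreal_less_iff)
    then show ?thesis using r by (intro that[of r]) (auto intro: ennreal_leI)
  qed
  have ev: "\<forall>\<^sub>F s in at_right u. X s \<omega> = stopped \<sigma> X s \<omega>"
    unfolding eventually_at_right_field using b bb by (auto simp: stopped_def intro!: exI[of _ b])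
  have su: "stopped \<sigma> X u \<omega> = X u \<omega>" using less_imp_le[OF True] by (simp add: stopped_def)
  have "((\<lambda>s. X s \<omega>) \<longlongrightarrow> X u \<omega>) (at_right u)" using rc[OF u0] by (simp add: continuous_within)
  then have "((\<lambda>s. stopped \<sigma> X s \<omega>) \<longlongrightarrow> stopped \<sigma> X u \<omega>) (at_right u)"
    unfolding su using ev by (rule Lim_transform_eventually)
  then show ?thesis by (simp add: continuous_within)
next
  case False
  then have le: "\<sigma> \<omega> \<le> ennreal u" by simp
  have c: "stopped \<sigma> X s \<omega> = X (enn2real (\<sigma> \<omega>)) \<omega>" if "u \<le> s" for s
  proof -
    have "\<sigma> \<omega> \<le> ennreal s" using le that by (meson ennreal_leI order_trans)
    then show ?thesis using stopped_eq[of s \<sigma> X \<omega>] that u0 by (simp add: min_absorb1)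
  qed
  have ev: "\<forall>\<^sub>F s in at_right u. X (enn2real (\<sigma> \<omega>)) \<omega> = stopped \<sigma> X s \<omega>"
    unfolding eventually_at_right_field using c by (auto intro!: exI[of _ "u+1"])
  have "((\<lambda>s. X (enn2real (\<sigma> \<omega>)) \<omega>) \<longlongrightarrow> stopped \<sigma> X u \<omega>) (at_right u)"
    using c[of u] by simp
  then have "((\<lambda>s. stopped \<sigma> X s \<omega>) \<longlongrightarrow> stopped \<sigma> X u \<omega>) (at_right u)"
    using ev by (rule Lim_transform_eventually)
  then show ?thesis by (simp add: continuous_within)
qed

lemma stopped_comm:
  assumes "0 \<le> u"
  shows "stopped \<tau> (stopped \<sigma> X) u \<omega> = stopped \<sigma> (stopped \<tau> X) u \<omega>"
proof -
  have f: "min (\<tau> \<omega>) (ennreal u) < \<infinity>" "min (\<sigma> \<omega>) (ennreal u) < \<infinity>"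
    by (simp_all add: min.strict_coboundedI2)
  have "stopped \<tau> (stopped \<sigma> X) u \<omega> = X (enn2real (min (\<sigma> \<omega>) (min (\<tau> \<omega>) (ennreal u)))) \<omega>"
    using assms f by (simp add: stopped_eq)
  also have "\<dots> = X (enn2real (min (\<tau> \<omega>) (min (\<sigma> \<omega>) (ennreal u)))) \<omega>"
    by (simp add: min.left_commute)
  also have "\<dots> = stopped \<sigma> (stopped \<tau> X) u \<omega>"
    using assms f by (simp add: stopped_eq)
  finally show ?thesis .
qed



context
  fixes P :: "'a measure" and F G :: "real \<Rightarrow> 'a measure" and X :: "real \<Rightarrow> 'a \<Rightarrow> real"
    and \<tau> :: "nat \<Rightarrow> 'a \<Rightarrow> ennreal" and Q :: "'a measure"
  assumes P: "prob_space P"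
    and ucF: "usual_conditions P F" and ucG: "usual_conditions P G" and subFG: "sub_filtration F G"
    and Xpos: "\<forall>t\<ge>0. \<forall>\<omega>\<in>space P. X t \<omega> > 0"
    and cadX: "cadlag P X"
    and loc\<tau>: "localizing_seq P F \<tau>"
    and h\<tau>: "\<forall>n. martingale P G (stopped (\<tau> n) X) \<and> bounded_process P (stopped (\<tau> n) X)"
    and eqQ: "equiv_measure Q P"
    and lmQ: "local_martingale Q G X"
begin

lemma QP: "prob_space Q" and spQ: "space Q = space P" and setsQ: "sets Q = sets P"
  using eqQ unfolding equiv_measure_def by auto

lemma filtF: "is_filtration P F" and filtG: "is_filtration P G"
  using ucF ucG unfolding usual_conditions_def by blast+

lemma nullF: "A \<in> sets P \<Longrightarrow> emeasure P A = 0 \<Longrightarrow> B \<subseteq> A \<Longrightarrow> B \<in> sets (F 0)"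
  using ucF unfolding usual_conditions_def by blast

lemma Fsub: "0 \<le> u \<Longrightarrow> subalgebra Q (F u)"
proof -
  assume "0 \<le> u"
  then have "subalgebra P (F u)" using filtF unfolding is_filtration_def by blast
  then show ?thesis using spQ setsQ unfolding subalgebra_def by simp
qed

lemma Gsub: "0 \<le> u \<Longrightarrow> subalgebra Q (G u)"
proof -
  assume "0 \<le> u"
  then have "subalgebra P (G u)" using filtG unfolding is_filtration_def by blast
  then show ?thesis using spQ setsQ unfolding subalgebra_def by simp
qed

lemma Fmono: "0 \<le> u \<Longrightarrow> u \<le> v \<Longrightarrow> sets (F u) \<subseteq> sets (F v)"
  using filtF unfolding is_filtration_def by blast

lemma Gmono: "0 \<le> u \<Longrightarrow> u \<le> v \<Longrightarrow> sets (G u) \<subseteq> sets (G v)"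
  using filtG unfolding is_filtration_def by blast

lemma FG: "0 \<le> u \<Longrightarrow> sets (F u) \<subseteq> sets (G u)"
  using subFG unfolding sub_filtration_def by blast

lemma Fspace: "0 \<le> u \<Longrightarrow> space (F u) = space Q"
  using Fsub unfolding subalgebra_def by blast

lemma Gspace: "0 \<le> u \<Longrightarrow> space (G u) = space Q"
  using Gsub unfolding subalgebra_def by blast

lemma AE_PQ:
  assumes "AE \<omega> in P. Pr \<omega>"
  shows "AE \<omega> in Q. Pr \<omega>"
proof -
  obtain N where N: "{\<omega>\<in>space P. \<not> Pr \<omega>} \<subseteq> N" "N \<in> null_sets P"
    using assms unfolding eventually_ae_filter by blast
  then have "N \<in> null_sets Q" using eqQ unfolding equiv_measure_def by (auto simp: null_sets_def)
  then show ?thesis using N spQ by (intro AE_I'[of N]) auto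
qed

lemma complete_meas:
  fixes f g :: "'a \<Rightarrow> real"
  assumes u0: "0 \<le> u" and f: "f \<in> borel_measurable (F u)" and ae: "AE \<omega> in Q. f \<omega> = g \<omega>"
  shows "g \<in> borel_measurable (F u)"
proof -
  obtain N where N: "{\<omega>\<in>space Q. \<not> f \<omega> = g \<omega>} \<subseteq> N" "N \<in> null_sets Q"
    using ae unfolding eventually_ae_filter by blast
  then have NP: "N \<in> sets P" "emeasure P N = 0" using eqQ unfolding equiv_measure_def by (auto simp: null_sets_def)
  have sub0: "B \<subseteq> N \<Longrightarrow> B \<in> sets (F u)" for B
    using nullF[OF NP] Fmono[OF order_refl u0] by blast
  have Nsp: "N \<subseteq> space Q" using N(2) setsQ by (auto dest: sets.sets_into_space)
  show ?thesis
  proof (rule measurableI)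
    show "g x \<in> space borel" for x by simp
    fix B :: "real set" assume B: "B \<in> sets borel"
    have fB: "f -` B \<inter> space (F u) \<in> sets (F u)" using f B by (rule measurable_sets)
    have "g -` B \<inter> space (F u) = ((f -` B \<inter> space (F u)) - N) \<union> (g -` B \<inter> space (F u) \<inter> N)"
    proof (intro equalityI subsetI)
      fix x assume x: "x \<in> g -` B \<inter> space (F u)"
      show "x \<in> ((f -` B \<inter> space (F u)) - N) \<union> (g -` B \<inter> space (F u) \<inter> N)"
      proof (cases "x \<in> N")
        case False
        then have "f x = g x" using N(1) x Fspace[OF u0] by auto
        then show ?thesis using x False by simp
      qed (use x in simp)
    next
      fix x assume x: "x \<in> ((f -` B \<inter> space (F u)) - N) \<union> (g -` B \<inter> space (F u) \<inter> N)"
      show "x \<in> g -` B \<inter> space (F u)"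
      proof (cases "x \<in> N")
        case False
        then have "f x = g x" using N(1) x Fspace[OF u0] by auto
        then show ?thesis using x False by simp
      qed (use x in simp)
    qed
    moreover have "(f -` B \<inter> space (F u)) - N \<in> sets (F u)" using fB sub0[OF order_refl] by auto
    moreover have "g -` B \<inter> space (F u) \<inter> N \<in> sets (F u)" by (rule sub0) auto
    ultimately show "g -` B \<inter> space (F u) \<in> sets (F u)" by (metis sets.Un)
  qed
qed

lemma stF:
  assumes "0 \<le> u"
  shows "{\<omega>\<in>space Q. \<tau> n \<omega> \<le> ennreal u} \<in> sets (F u)"
proof -
  have "is_stopping_time F (\<tau> n)" using loc\<tau> unfolding localizing_seq_def by blast
  then have "{\<omega>\<in>space (F u). \<tau> n \<omega> \<le> ennreal u} \<in> sets (F u)"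
    using assms unfolding is_stopping_time_def by blast
  then show ?thesis using Fspace[OF assms] by simp
qed

lemma stG:
  assumes "0 \<le> u"
  shows "{\<omega>\<in>space Q. \<tau> n \<omega> \<le> ennreal u} \<in> sets (G u)"
  using stF[OF assms] FG[OF assms] by auto

lemma M_bounded: "\<exists>C. \<forall>u\<ge>0. \<forall>\<omega>\<in>space Q. \<bar>stopped (\<tau> n) X u \<omega>\<bar> \<le> C"
  using h\<tau> spQ unfolding bounded_process_def by auto

lemma M_adapted: "0 \<le> u \<Longrightarrow> stopped (\<tau> n) X u \<in> borel_measurable (G u)"
  using h\<tau> unfolding martingale_def adapted_def by auto

lemma M_meas: "0 \<le> u \<Longrightarrow> stopped (\<tau> n) X u \<in> borel_measurable Q"
  using measurable_from_subalg[OF Gsub M_adapted] by auto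

lemma M_int: "0 \<le> u \<Longrightarrow> integrable Q (stopped (\<tau> n) X u)"
proof -
  assume u0: "0 \<le> u"
  interpret prob_space Q by (rule QP)
  obtain C where C: "\<forall>u\<ge>0. \<forall>\<omega>\<in>space Q. \<bar>stopped (\<tau> n) X u \<omega>\<bar> \<le> C" using M_bounded by blast
  show ?thesis using C u0 by (intro integrable_const_bound[where B=C] AE_I2 M_meas[OF u0]) auto
qed


lemma Xrc: "\<omega> \<in> space Q \<Longrightarrow> 0 \<le> u \<Longrightarrow> continuous (at_right u) (\<lambda>s. X s \<omega>)"
  using cadX spQ unfolding cadlag_def by auto

lemma M_mart:
  assumes s0: "0 \<le> s" and st: "s \<le> t" and A: "A \<in> sets (G s)"
  shows "(\<integral>\<omega>. indicator A \<omega> * stopped (\<tau> n) X t \<omega> \<partial>Q) = (\<integral>\<omega>. indicator A \<omega> * stopped (\<tau> n) X s \<omega> \<partial>Q)"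
proof -
  interpret prob_space Q by (rule QP)
  have t0: "0 \<le> t" using s0 st by simp
  obtain \<sigma> where ls: "localizing_seq Q G \<sigma>" and ms: "\<And>k. martingale Q G (stopped (\<sigma> k) X)"
    using lmQ unfolding local_martingale_def by blast
  define M where "M = stopped (\<tau> n) X"
  obtain C where C: "\<forall>u\<ge>0. \<forall>\<omega>\<in>space Q. \<bar>M u \<omega>\<bar> \<le> C" using M_bounded unfolding M_def by blast
  have AQ: "A \<in> sets Q" using Gsub[OF s0] A unfolding subalgebra_def by blast
  have key: "integrable Q (stopped (\<tau> n) (stopped (\<sigma> k) X) u) \<and>
     (\<integral>\<omega>. indicator A \<omega> * stopped (\<tau> n) (stopped (\<sigma> k) X) t \<omega> \<partial>Q) =
     (\<integral>\<omega>. indicator A \<omega> * stopped (\<tau> n) (stopped (\<sigma> k) X) s \<omega> \<partial>Q)" if u0: "0 \<le> u" for k u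
  proof -
    define N where "N = stopped (\<sigma> k) X"
    have adp: "\<And>u. 0 \<le> u \<Longrightarrow> N u \<in> borel_measurable (G u)"
      using ms[of k] unfolding N_def martingale_def adapted_def by blast
    have intg: "\<And>u. 0 \<le> u \<Longrightarrow> integrable Q (N u)"
      using ms[of k] unfolding N_def martingale_def by blast
    have mart: "\<And>u v B. 0 \<le> u \<Longrightarrow> u \<le> v \<Longrightarrow> B \<in> sets (G u) \<Longrightarrow>
                 (\<integral>x. indicator B x * N v x \<partial>Q) = (\<integral>x. indicator B x * N u x \<partial>Q)"
      unfolding N_def by (rule mart_int[OF QP Gsub ms])
    have pos: "\<And>u \<omega>. 0 \<le> u \<Longrightarrow> \<omega> \<in> space Q \<Longrightarrow> 0 \<le> N u \<omega>"
      unfolding N_def using Xpos spQ theta_props(1) by (auto simp: stopped_eq less_imp_le)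
    have rc: "\<And>u \<omega>. 0 \<le> u \<Longrightarrow> \<omega> \<in> space Q \<Longrightarrow> continuous (at_right u) (\<lambda>s. N s \<omega>)"
      unfolding N_def by (rule stopped_rc[OF Xrc])
    have sm1: "integrable Q (stopped (\<tau> n) N u)"
      apply (rule stop_mart(1)[of Q G N "\<tau> n" 0 u "{}"])
                 apply (rule QP)
                apply (erule Gsub)
               apply (erule (1) Gmono)
              apply (erule adp)
             apply (erule intg)
            apply (erule (2) mart)
           apply (erule (1) pos)
          apply (erule (1) rc)
         apply (erule stG)
        apply simp
       apply (rule u0)
      apply simp
      done
    have sm2: "(\<integral>\<omega>. indicator A \<omega> * stopped (\<tau> n) N t \<omega> \<partial>Q) = (\<integral>\<omega>. indicator A \<omega> * stopped (\<tau> n) N s \<omega> \<partial>Q)"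
      apply (rule stop_mart(2)[of Q G N "\<tau> n" s t A])
                 apply (rule QP)
                apply (erule Gsub)
               apply (erule (1) Gmono)
              apply (erule adp)
             apply (erule intg)
            apply (erule (2) mart)
           apply (erule (1) pos)
          apply (erule (1) rc)
         apply (erule stG)
        apply (rule s0)
       apply (rule st)
      apply (rule A)
      done
    show ?thesis using sm1 sm2 unfolding N_def by blast
  qed
  have comm: "stopped (\<tau> n) (stopped (\<sigma> k) X) u = stopped (\<sigma> k) M u" if "0 \<le> u" for k u
    unfolding M_def by (rule ext) (rule stopped_comm[OF that])
  have conv: "(\<lambda>k. \<integral>\<omega>. indicator A \<omega> * stopped (\<sigma> k) M u \<omega> \<partial>Q) \<longlonglongrightarrow> (\<integral>\<omega>. indicator A \<omega> * M u \<omega> \<partial>Q)"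
    if u0: "0 \<le> u" for u
  proof (rule integral_dominated_convergence[where w="\<lambda>_. C"])
    show "(\<lambda>\<omega>. indicator A \<omega> * M u \<omega>) \<in> borel_measurable Q"
      using M_meas[OF u0] AQ unfolding M_def by measurable
    show "(\<lambda>\<omega>. indicator A \<omega> * stopped (\<sigma> k) M u \<omega>) \<in> borel_measurable Q" for k
    proof -
      have "stopped (\<sigma> k) M u \<in> borel_measurable Q"
        using key[OF u0, of k] comm[OF u0, of k] by auto
      then show ?thesis using AQ by measurable
    qed
    show "integrable Q (\<lambda>\<omega>. C)" by simp
    have "AE \<omega> in Q. (\<lambda>k. \<sigma> k \<omega>) \<longlonglongrightarrow> \<infinity>" using ls unfolding localizing_seq_def by auto
    then show "AE \<omega> in Q. (\<lambda>k. indicator A \<omega> * stopped (\<sigma> k) M u \<omega>) \<longlonglongrightarrow> indicator A \<omega> * M u \<omega>"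
    proof (rule AE_mp, intro AE_I2 impI)
      fix \<omega> assume "(\<lambda>k. \<sigma> k \<omega>) \<longlonglongrightarrow> \<infinity>"
      then have "\<forall>\<^sub>F k in sequentially. ennreal u < \<sigma> k \<omega>"
        by (rule order_tendstoD(1)) simp
      then have "\<forall>\<^sub>F k in sequentially. indicator A \<omega> * M u \<omega> = indicator A \<omega> * stopped (\<sigma> k) M u \<omega>"
        by eventually_elim (auto simp: stopped_def less_imp_le)
      then show "(\<lambda>k. indicator A \<omega> * stopped (\<sigma> k) M u \<omega>) \<longlonglongrightarrow> indicator A \<omega> * M u \<omega>"
        by (rule Lim_transform_eventually[OF tendsto_const])
    qed
    show "AE \<omega> in Q. norm (indicator A \<omega> * stopped (\<sigma> k) M u \<omega>) \<le> C" for k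
    proof (intro AE_I2)
      fix \<omega> assume w: "\<omega> \<in> space Q"
      have "\<bar>stopped (\<sigma> k) M u \<omega>\<bar> \<le> C"
        using C w u0 theta_props(1)[of u "\<sigma> k" \<omega>] by (simp add: stopped_eq)
      moreover have "0 \<le> C" using C w by (meson abs_ge_zero order_trans order_refl)
      ultimately show "norm (indicator A \<omega> * stopped (\<sigma> k) M u \<omega>) \<le> C"
        by (auto split: split_indicator)
    qed
  qed
  have eqk: "(\<integral>\<omega>. indicator A \<omega> * stopped (\<sigma> k) M t \<omega> \<partial>Q) = (\<integral>\<omega>. indicator A \<omega> * stopped (\<sigma> k) M s \<omega> \<partial>Q)" for k
    using key[OF t0, of k] comm[OF t0, of k] comm[OF s0, of k] by simp
  have c2: "(\<lambda>k. \<integral>\<omega>. indicator A \<omega> * stopped (\<sigma> k) M t \<omega> \<partial>Q) \<longlonglongrightarrow> (\<integral>\<omega>. indicator A \<omega> * M s \<omega> \<partial>Q)"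
    unfolding eqk by (rule conv[OF s0])
  show ?thesis
    using LIMSEQ_unique[OF conv[OF t0] c2] unfolding M_def .
qed


lemma Finf_sub: "F_infty Q F \<subseteq> sets Q"
proof -
  have "(\<Union>t\<in>{0..}. sets (F t)) \<subseteq> sets Q" using Fsub unfolding subalgebra_def by auto
  then have "sigma_sets (space Q) (\<Union>t\<in>{0..}. sets (F t)) \<subseteq> sets Q" by (rule sets.sigma_sets_subset)
  then show ?thesis unfolding F_infty_def spQ .
qed

definition SS :: "('a \<Rightarrow> ennreal) \<Rightarrow> 'a set set" where
  "SS \<rho> = {A \<in> F_infty Q F. \<forall>t\<ge>0. {\<omega>\<in>A. \<rho> \<omega> \<le> ennreal t} \<in> sets (F t)}"

lemma SS_Pow: "SS \<rho> \<subseteq> Pow (space Q)"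
  using Finf_sub sets.sets_into_space unfolding SS_def by blast

lemma FA_sets: "sets (F_at Q F \<rho>) = sigma_sets (space Q) (SS \<rho>)"
  unfolding F_at_def SS_def[symmetric] by (rule sets_measure_of[OF SS_Pow])

lemma FA_space: "space (F_at Q F \<rho>) = space Q"
  unfolding F_at_def by (rule space_measure_of_conv)

lemma FA_subQ: "subalgebra Q (F_at Q F \<rho>)"
proof -
  have "SS \<rho> \<subseteq> sets Q" using Finf_sub unfolding SS_def by blast
  then have "sigma_sets (space Q) (SS \<rho>) \<subseteq> sets Q" by (rule sets.sigma_sets_subset)
  then show ?thesis unfolding subalgebra_def FA_sets FA_space by simp
qed

lemma FA_subF:
  assumes u0: "0 \<le> u" and le: "\<And>\<omega>. \<omega> \<in> space Q \<Longrightarrow> \<rho> \<omega> \<le> ennreal u"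
  shows "subalgebra (F u) (F_at Q F \<rho>)"
proof -
  have "SS \<rho> \<subseteq> sets (F u)"
  proof
    fix B assume B: "B \<in> SS \<rho>"
    then have "B \<subseteq> space Q" using SS_Pow by blast
    then have "{\<omega>\<in>B. \<rho> \<omega> \<le> ennreal u} = B" using le by blast
    then show "B \<in> sets (F u)" using B u0 unfolding SS_def by (metis (no_types, lifting) mem_Collect_eq)
  qed
  then have "sigma_sets (space (F u)) (SS \<rho>) \<subseteq> sets (F u)" by (rule sets.sigma_sets_subset)
  then show ?thesis unfolding subalgebra_def FA_sets FA_space Fspace[OF u0] by simp
qed

lemma FA_mem:
  assumes s0: "0 \<le> s" and B: "B \<in> sets (F s)" and h: "\<And>v. 0 \<le> v \<Longrightarrow> {\<omega>\<in>B. \<rho> \<omega> \<le> ennreal v} \<in> sets (F v)"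
  shows "B \<in> sets (F_at Q F \<rho>)"
proof -
  have "B \<in> F_infty Q F" unfolding F_infty_def using B s0 by (intro sigma_sets.Basic) auto
  then have "B \<in> SS \<rho>" unfolding SS_def using h by blast
  then show ?thesis unfolding FA_sets by (rule sigma_sets.Basic)
qed

lemma rho_stop: "0 \<le> u \<Longrightarrow> is_stopping_time F (\<lambda>\<omega>. min (\<tau> n \<omega>) (ennreal u))"
  unfolding is_stopping_time_def
proof (intro allI impI)
  fix t :: real assume u0: "0 \<le> u" and t0: "0 \<le> t"
  show "{\<omega> \<in> space (F t). min (\<tau> n \<omega>) (ennreal u) \<le> ennreal t} \<in> sets (F t)"
  proof (cases "u \<le> t")
    case True
    then have "{\<omega> \<in> space (F t). min (\<tau> n \<omega>) (ennreal u) \<le> ennreal t} = space (F t)"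
      by (auto simp: min_le_iff_disj ennreal_leI)
    then show ?thesis by simp
  next
    case False
    then have "{\<omega> \<in> space (F t). min (\<tau> n \<omega>) (ennreal u) \<le> ennreal t} = {\<omega>\<in>space Q. \<tau> n \<omega> \<le> ennreal t}"
      using Fspace[OF t0] u0 t0 by (auto simp: min_le_iff_disj ennreal_le_iff)
    then show ?thesis using stF[OF t0] by simp
  qed
qed

lemma const_stop: "0 \<le> u \<Longrightarrow> is_stopping_time F (\<lambda>\<omega>. ennreal u)"
  unfolding is_stopping_time_def
proof (intro allI impI)
  fix t :: real assume u0: "0 \<le> u" and t0: "0 \<le> t"
  show "{\<omega> \<in> space (F t). ennreal u \<le> ennreal t} \<in> sets (F t)"
    by (cases "ennreal u \<le> ennreal t") auto
qed

lemma value_at_rho: "0 \<le> u \<Longrightarrow> value_at W (\<lambda>\<omega>. min (\<tau> n \<omega>) (ennreal u)) = stopped (\<tau> n) W u"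
  by (rule ext) (simp add: value_at_def stopped_eq min.strict_coboundedI2)

lemma value_at_const: "0 \<le> u \<Longrightarrow> value_at W (\<lambda>\<omega>. ennreal u) = W u"
  by (rule ext) (simp add: value_at_def)

lemma loc_Q: "localizing_seq Q F \<tau>"
  using loc\<tau> AE_PQ unfolding localizing_seq_def by blast

context
  fixes Y :: "real \<Rightarrow> 'a \<Rightarrow> real"
  assumes opY: "optional_projection Q F X Y"
begin

lemma Y_ae:
  assumes "is_stopping_time F \<rho>"
  shows "AE \<omega> in Q. value_at Y \<rho> \<omega> = real_cond_exp Q (F_at Q F \<rho>) (value_at X \<rho>) \<omega>"
  using opY assms unfolding optional_projection_def by blast

lemma va_meas:
  assumes st: "is_stopping_time F \<rho>" and u0: "0 \<le> u" and le: "\<And>\<omega>. \<omega> \<in> space Q \<Longrightarrow> \<rho> \<omega> \<le> ennreal u"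
  shows "value_at Y \<rho> \<in> borel_measurable (F u)"
proof (rule complete_meas[OF u0])
  show "real_cond_exp Q (F_at Q F \<rho>) (value_at X \<rho>) \<in> borel_measurable (F u)"
  proof -
    have sa: "subalgebra (F u) (F_at Q F \<rho>)" by (rule FA_subF[OF u0]) (erule le)
    show ?thesis by (rule measurable_from_subalg[OF sa]) (rule borel_measurable_cond_exp)
  qed
  show "AE \<omega> in Q. real_cond_exp Q (F_at Q F \<rho>) (value_at X \<rho>) \<omega> = value_at Y \<rho> \<omega>"
    using Y_ae[OF st] by auto
qed

lemma Y_adapted: "adapted F Y"
  unfolding adapted_def
proof (intro allI impI)
  fix u :: real assume u0: "0 \<le> u"
  show "Y u \<in> borel_measurable (F u)"
  proof -
    have "value_at Y (\<lambda>\<omega>. ennreal u) = Y u" by (rule value_at_const[OF u0])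
    then show ?thesis using va_meas[OF const_stop[OF u0] u0] by simp
  qed
qed


lemma Z_ae:
  assumes u0: "0 \<le> u"
  shows "AE \<omega> in Q. stopped (\<tau> n) Y u \<omega> =
     real_cond_exp Q (F_at Q F (\<lambda>\<omega>. min (\<tau> n \<omega>) (ennreal u))) (stopped (\<tau> n) X u) \<omega>"
  using Y_ae[OF rho_stop[OF u0, of n]] value_at_rho[OF u0, of Y n] value_at_rho[OF u0, of X n] by simp

lemma Z_meas: "0 \<le> u \<Longrightarrow> stopped (\<tau> n) Y u \<in> borel_measurable (F u)"
  using va_meas[OF rho_stop, of u u n] value_at_rho[of u Y n] by (simp add: min.coboundedI2)

lemma Z_measQ: "0 \<le> u \<Longrightarrow> stopped (\<tau> n) Y u \<in> borel_measurable Q"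
  using measurable_from_subalg[OF Fsub Z_meas] by blast

lemma Z_int_set:
  assumes u0: "0 \<le> u" and B: "B \<in> sets (F_at Q F (\<lambda>\<omega>. min (\<tau> n \<omega>) (ennreal u)))"
  shows "integrable Q (stopped (\<tau> n) Y u)"
    "(\<integral>\<omega>. indicator B \<omega> * stopped (\<tau> n) Y u \<omega> \<partial>Q) = (\<integral>\<omega>. indicator B \<omega> * stopped (\<tau> n) X u \<omega> \<partial>Q)"
proof -
  let ?FA = "F_at Q F (\<lambda>\<omega>. min (\<tau> n \<omega>) (ennreal u))"
  interpret sigma_finite_subalgebra Q ?FA by (rule sfs_of_prob[OF QP FA_subQ])
  have iM: "integrable Q (stopped (\<tau> n) X u)" by (rule M_int[OF u0])
  have ic: "integrable Q (real_cond_exp Q ?FA (stopped (\<tau> n) X u))" by (rule real_cond_exp_int(1)[OF iM])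
  have ae: "AE \<omega> in Q. real_cond_exp Q ?FA (stopped (\<tau> n) X u) \<omega> = stopped (\<tau> n) Y u \<omega>"
    using Z_ae[OF u0, of n] by (auto elim: AE_mp)
  show "integrable Q (stopped (\<tau> n) Y u)"
    using ic ae Z_measQ[OF u0] by (subst integrable_cong_AE[symmetric]) auto
  have BQ[measurable]: "B \<in> sets Q" using FA_subQ B unfolding subalgebra_def by blast
  note Z_measQ[OF u0, measurable]
  have "(\<integral>\<omega>. indicator B \<omega> * stopped (\<tau> n) Y u \<omega> \<partial>Q) = (\<integral>\<omega>\<in>B. real_cond_exp Q ?FA (stopped (\<tau> n) X u) \<omega> \<partial>Q)"
    unfolding set_lebesgue_integral_def using ae by (intro integral_cong_AE) auto
  also have "\<dots> = (\<integral>\<omega>\<in>B. stopped (\<tau> n) X u \<omega> \<partial>Q)"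
    by (rule real_cond_exp_intA[OF iM B, symmetric])
  finally show "(\<integral>\<omega>. indicator B \<omega> * stopped (\<tau> n) Y u \<omega> \<partial>Q) = (\<integral>\<omega>. indicator B \<omega> * stopped (\<tau> n) X u \<omega> \<partial>Q)"
    by (simp add: set_lebesgue_integral_def)
qed

lemma Z_mart: "martingale Q F (stopped (\<tau> n) Y)"
  unfolding martingale_def
proof (intro conjI allI impI)
  show "adapted F (stopped (\<tau> n) Y)" unfolding adapted_def using Z_meas by blast
  show "integrable Q (stopped (\<tau> n) Y u)" if "0 \<le> u" for u
    using Z_int_set(1)[OF that sets.empty_sets] .
  fix s t :: real assume s0: "0 \<le> s" and st: "s \<le> t"
  have t0: "0 \<le> t" using s0 st by simp
  interpret sigma_finite_subalgebra Q "F s" by (rule sfs_of_prob[OF QP Fsub[OF s0]])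
  show "AE \<omega> in Q. real_cond_exp Q (F s) (stopped (\<tau> n) Y t) \<omega> = stopped (\<tau> n) Y s \<omega>"
  proof (rule real_cond_exp_charact)
    show "integrable Q (stopped (\<tau> n) Y t)" using Z_int_set(1)[OF t0 sets.empty_sets] .
    show "integrable Q (stopped (\<tau> n) Y s)" using Z_int_set(1)[OF s0 sets.empty_sets] .
    show "stopped (\<tau> n) Y s \<in> borel_measurable (F s)" by (rule Z_meas[OF s0])
    fix A assume A: "A \<in> sets (F s)"
    have AQ: "A \<in> sets Q" using Fsub[OF s0] A unfolding subalgebra_def by blast
    have Asp: "A \<subseteq> space Q" using sets.sets_into_space[OF AQ] .
    define A1 where "A1 = A \<inter> {\<omega>\<in>space Q. \<not> \<tau> n \<omega> \<le> ennreal s}"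
    define A2 where "A2 = A \<inter> {\<omega>\<in>space Q. \<tau> n \<omega> \<le> ennreal s}"
    have A2F: "A2 \<in> sets (F s)" unfolding A2_def using A stF[OF s0] by auto
    have A1F: "A1 \<in> sets (F s)"
    proof -
      have "A1 = A - {\<omega>\<in>space Q. \<tau> n \<omega> \<le> ennreal s}" unfolding A1_def using Asp by auto
      then show ?thesis using A stF[OF s0] by auto
    qed
    have A1Q: "A1 \<in> sets Q" and A2Q: "A2 \<in> sets Q" using Fsub[OF s0] A1F A2F unfolding subalgebra_def by auto
    have A1G: "A1 \<in> sets (G s)" using FG[OF s0] A1F by auto
    have A1FA: "A1 \<in> sets (F_at Q F (\<lambda>\<omega>. min (\<tau> n \<omega>) (ennreal u)))" if u: "s \<le> u" for u
    proof (rule FA_mem[OF s0 A1F])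
      fix v :: real assume v0: "0 \<le> v"
      show "{\<omega>\<in>A1. min (\<tau> n \<omega>) (ennreal u) \<le> ennreal v} \<in> sets (F v)"
      proof (cases "s \<le> v")
        case True
        have "{\<omega>\<in>A1. min (\<tau> n \<omega>) (ennreal u) \<le> ennreal v} =
            A1 \<inter> {\<omega> \<in> space (F v). min (\<tau> n \<omega>) (ennreal u) \<le> ennreal v}"
          using Fspace[OF v0] A1Q sets.sets_into_space by auto
        moreover have "{\<omega> \<in> space (F v). min (\<tau> n \<omega>) (ennreal u) \<le> ennreal v} \<in> sets (F v)"
          using rho_stop[of u n] s0 u v0 unfolding is_stopping_time_def by auto
        moreover have "A1 \<in> sets (F v)" using Fmono[OF s0 True] A1F by auto
        ultimately show ?thesis by auto
      next
        case False
        have e: "{\<omega>\<in>A1. min (\<tau> n \<omega>) (ennreal u) \<le> ennreal v} = {}"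
        proof safe
          fix x assume x: "x \<in> A1" "min (\<tau> n x) (ennreal u) \<le> ennreal v"
          have "ennreal v < ennreal s" using False v0 by (simp add: ennreal_less_iff)
          moreover have "ennreal s \<le> ennreal u" using u by (simp add: ennreal_leI)
          ultimately have "\<tau> n x \<le> ennreal v" using x(2) by (auto simp: min_le_iff_disj)
          then have "\<tau> n x \<le> ennreal s" using False by (meson ennreal_leI le_cases order_trans)
          then show "x \<in> {}" using x(1) unfolding A1_def by auto
        qed
        show ?thesis unfolding e by (rule sets.empty_sets)
      qed
    qed
    have eq2: "indicator A2 \<omega> * stopped (\<tau> n) Y t \<omega> = indicator A2 \<omega> * stopped (\<tau> n) Y s \<omega>" for \<omega>
    proof (cases "\<omega> \<in> A2")
      case True
      then have "\<tau> n \<omega> \<le> ennreal s" unfolding A2_def by auto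
      then have "min (\<tau> n \<omega>) (ennreal t) = \<tau> n \<omega>" "min (\<tau> n \<omega>) (ennreal s) = \<tau> n \<omega>"
        using st by (auto simp: min_def intro: order_trans ennreal_leI)
      then show ?thesis using stopped_eq[OF t0, of "\<tau> n" Y \<omega>] stopped_eq[OF s0, of "\<tau> n" Y \<omega>] by simp
    qed simp
    have split: "indicator A \<omega> * f \<omega> = indicator A1 \<omega> * f \<omega> + indicator A2 \<omega> * (f \<omega>::real)" for f \<omega>
      unfolding A1_def A2_def using Asp by (auto split: split_indicator)
    have iA: "integrable Q (\<lambda>\<omega>. indicator B \<omega> * stopped (\<tau> n) Y u \<omega>)" if "B \<in> sets Q" "0 \<le> u" for B u
      using integrable_mult_indicator[OF that(1) Z_int_set(1)[OF that(2) sets.empty_sets]] by simp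
    have "(\<integral>\<omega>\<in>A. stopped (\<tau> n) Y t \<omega> \<partial>Q) = (\<integral>\<omega>. indicator A \<omega> * stopped (\<tau> n) Y t \<omega> \<partial>Q)"
      by (simp add: set_lebesgue_integral_def)
    also have "\<dots> = (\<integral>\<omega>. indicator A1 \<omega> * stopped (\<tau> n) Y t \<omega> \<partial>Q) + (\<integral>\<omega>. indicator A2 \<omega> * stopped (\<tau> n) Y t \<omega> \<partial>Q)"
      unfolding split[of _ "stopped (\<tau> n) Y t"] using iA[OF A1Q t0] iA[OF A2Q t0]
      by (rule Bochner_Integration.integral_add)
    also have "(\<integral>\<omega>. indicator A1 \<omega> * stopped (\<tau> n) Y t \<omega> \<partial>Q) = (\<integral>\<omega>. indicator A1 \<omega> * stopped (\<tau> n) X t \<omega> \<partial>Q)"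
      by (rule Z_int_set(2)[OF t0 A1FA[OF st]])
    also have "\<dots> = (\<integral>\<omega>. indicator A1 \<omega> * stopped (\<tau> n) X s \<omega> \<partial>Q)"
      by (rule M_mart[OF s0 st A1G])
    also have "\<dots> = (\<integral>\<omega>. indicator A1 \<omega> * stopped (\<tau> n) Y s \<omega> \<partial>Q)"
      by (rule Z_int_set(2)[OF s0 A1FA[OF order_refl], symmetric])
    also have "(\<integral>\<omega>. indicator A2 \<omega> * stopped (\<tau> n) Y t \<omega> \<partial>Q) = (\<integral>\<omega>. indicator A2 \<omega> * stopped (\<tau> n) Y s \<omega> \<partial>Q)"
      unfolding eq2 ..
    also have "(\<integral>\<omega>. indicator A1 \<omega> * stopped (\<tau> n) Y s \<omega> \<partial>Q) + (\<integral>\<omega>. indicator A2 \<omega> * stopped (\<tau> n) Y s \<omega> \<partial>Q)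
        = (\<integral>\<omega>. indicator A \<omega> * stopped (\<tau> n) Y s \<omega> \<partial>Q)"
      unfolding split[of _ "stopped (\<tau> n) Y s"] using iA[OF A1Q s0] iA[OF A2Q s0]
      by (rule Bochner_Integration.integral_add[symmetric])
    also have "\<dots> = (\<integral>\<omega>\<in>A. stopped (\<tau> n) Y s \<omega> \<partial>Q)"
      by (simp add: set_lebesgue_integral_def)
    finally show "(\<integral>\<omega>\<in>A. stopped (\<tau> n) Y t \<omega> \<partial>Q) = (\<integral>\<omega>\<in>A. stopped (\<tau> n) Y s \<omega> \<partial>Q)" .
  qed
qed

lemma Y_lm: "local_martingale Q F Y"
  unfolding local_martingale_def
proof (intro conjI exI[of _ \<tau>] allI)
  show "cadlag Q Y" using opY unfolding optional_projection_def by blast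
  show "adapted F Y" by (rule Y_adapted)
  show "localizing_seq Q F \<tau>" by (rule loc_Q)
  show "martingale Q F (stopped (\<tau> n) Y)" for n by (rule Z_mart)
qed

end


end


theorem mainTheorem1:
  fixes P :: "'a measure"
    and F G :: "real \<Rightarrow> 'a measure"
    and X :: "real \<Rightarrow> 'a \<Rightarrow> real"
    and \<tau> :: "nat \<Rightarrow> 'a \<Rightarrow> ennreal"
  assumes "prob_space P"
    and "usual_conditions P F" and "usual_conditions P G" and "sub_filtration F G"
    and "\<forall>t\<ge>0. \<forall>\<omega>\<in>space P. X t \<omega> > 0"
    and "cadlag P X"
    and "local_martingale P G X"
    and "localizing_seq P F \<tau>"
    and "\<forall>n. martingale P G (stopped (\<tau> n) X) \<and> bounded_process P (stopped (\<tau> n) X)"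
  shows "\<forall>Q. equiv_measure Q P \<longrightarrow> local_martingale Q G X \<longrightarrow>
           (\<forall>Y. optional_projection Q F X Y \<longrightarrow> local_martingale Q F Y)"
proof (intro allI impI)
  fix Q Y
  assume eq: "equiv_measure Q P" and lm: "local_martingale Q G X" and op: "optional_projection Q F X Y"
  show "local_martingale Q F Y"
    by (rule Y_lm[OF assms(1) assms(2) assms(3) assms(4) assms(5) assms(6) assms(8) assms(9) eq lm op])
qed

end
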